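(* Let $q$ be a prime power, $h\geq 2$, let $f:\mathbb{F}_{q^h}\to\mathbb{F}_q$ be a nonzero $\mathbb{F}_q$-linear functional, $\alpha\in\mathbb{F}_{q^h}\setminus\mathbb{F}_q$ and $\beta\in\mathbb{F}_{q^h}\setminus\{0\}$. Let $\mathcal{L}=\{(x:f(x)+y\alpha:y\beta): x\in\mathbb{F}_{q^h},\ y\in\mathbb{F}_q,\ (x,y)\neq(0,0)\}$ and let $\varphi$ be the collineation of $\mathrm{PG}(2,q^h)$ given by $(x:y:z)\mapsto(z:x:y)$. Suppose that (1) $f(\alpha/\beta)\neq 1$, and (2) for all $k\in\mathbb{F}_q$, $k\neq f\left(\frac{\alpha^2}{\beta}\right)+\left(f\left(\frac{\beta^2}{\alpha+k}\right)+k\right)f\left(\frac{\alpha}{\beta}\right)+k f\left(\frac{\beta^2}{\alpha+k}\right)f\left(\frac{1}{\beta}\right)$. Then $\mathcal{L}$ and $\varphi(\mathcal{L})$ are disjoint.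
   Context: Points of $\mathrm{PG}(2,q^h)$ are written in homogeneous coordinates $(a:b:c)$. *)

theory Defs
  imports "HOL-Computational_Algebra.Primes"
begin

text \<open>The subfield F_q of a finite field of order q^h: the fixed points of x \<mapsto> x^q.\<close>
definition Fsub :: "nat \<Rightarrow> 'a::field set" where
  "Fsub q = {x. x ^ q = x}"

definition Fq_functional :: "nat \<Rightarrow> ('a::field \<Rightarrow> 'a) \<Rightarrow> bool" where
  "Fq_functional q f \<longleftrightarrow> (\<forall>x. f x \<in> Fsub q) \<and> (\<forall>x y. f (x + y) = f x + f y)
     \<and> (\<forall>k\<in>Fsub q. \<forall>x. f (k * x) = k * f x)"

definition pg_point :: "'a::field \<times> 'a \<times> 'a \<Rightarrow> ('a \<times> 'a \<times> 'a) set" where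
  "pg_point v = {(c * fst v, c * fst (snd v), c * snd (snd v)) | c. c \<noteq> 0}"

definition phi_pt :: "('a \<times> 'a \<times> 'a) set \<Rightarrow> ('a \<times> 'a \<times> 'a) set" where
  "phi_pt P = (\<lambda>(a, b, c). (c, a, b)) ` P"

definition L_set :: "nat \<Rightarrow> ('a::field \<Rightarrow> 'a) \<Rightarrow> 'a \<Rightarrow> 'a \<Rightarrow> ('a \<times> 'a \<times> 'a) set set" where
  "L_set q f \<alpha> \<beta> = {pg_point (x, f x + y * \<alpha>, y * \<beta>) | x y. y \<in> Fsub q \<and> (x, y) \<noteq> (0, 0)}"

end

theory Submission
  imports Defs
begin

lemma Fsub_mult: "a \<in> Fsub q \<Longrightarrow> b \<in> Fsub q \<Longrightarrow> (a * b :: 'a::field) \<in> Fsub q"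
  by (simp add: Fsub_def power_mult_distrib)

lemma Fsub_div: "a \<in> Fsub q \<Longrightarrow> b \<in> Fsub q \<Longrightarrow> (a / b :: 'a::field) \<in> Fsub q"
  by (simp add: Fsub_def power_divide)

lemma phi_pg: "phi_pt (pg_point (a, b, c)) = pg_point (c, a, b)"
  unfolding phi_pt_def pg_point_def by (auto simp: image_iff; blast)

lemma in_pg: "u \<in> pg_point v \<Longrightarrow> \<exists>c. c \<noteq> 0 \<and> u = (c * fst v, c * fst (snd v), c * snd (snd v))"
  unfolding pg_point_def by auto

lemma self_pg: "(a, b, c) \<in> pg_point (a, b, c)"
  unfolding pg_point_def by force

theorem theorem4p1:
  fixes f :: "'a::{field,finite} \<Rightarrow> 'a" and q h :: nat and \<alpha> \<beta> :: 'a
  assumes "\<exists>p m. prime p \<and> m > 0 \<and> q = p ^ m"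
    and "h \<ge> 2"
    and "card (UNIV :: 'a set) = q ^ h"
    and "Fq_functional q f"
    and "f \<noteq> (\<lambda>_. 0)"
    and "\<alpha> \<notin> Fsub q"
    and "\<beta> \<noteq> 0"
    and "f (\<alpha> / \<beta>) \<noteq> 1"
    and "\<forall>k\<in>Fsub q. k \<noteq> f (\<alpha>^2 / \<beta>) + (f (\<beta>^2 / (\<alpha> + k)) + k) * f (\<alpha> / \<beta>)
                          + k * f (\<beta>^2 / (\<alpha> + k)) * f (1 / \<beta>)"
  shows "L_set q f \<alpha> \<beta> \<inter> phi_pt ` L_set q f \<alpha> \<beta> = {}"
proof (rule ccontr)
  have rng: "\<And>x. f x \<in> Fsub q" and lin: "\<And>x y. f (x + y) = f x + f y"
    and sc: "\<And>k x. k \<in> Fsub q \<Longrightarrow> f (k * x) = k * f x"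
    using assms(4) unfolding Fq_functional_def by auto
  have f0: "f 0 = 0"
  proof -
    have "f 0 + 0 = f 0 + f 0" using lin[of 0 0] by simp
    then show ?thesis by (metis add_left_cancel)
  qed
  have fneg: "\<And>x. f (- x) = - f x" using lin f0 by (metis add_eq_0_iff)
  assume "L_set q f \<alpha> \<beta> \<inter> phi_pt ` L_set q f \<alpha> \<beta> \<noteq> {}"
  then obtain x y x' y' where y: "y \<in> Fsub q" and xy: "(x, y) \<noteq> (0, 0)"
    and y': "y' \<in> Fsub q"
    and eq: "pg_point (x, f x + y * \<alpha>, y * \<beta>) = pg_point (y' * \<beta>, x', f x' + y' * \<alpha>)"
  proof -
    obtain P where P1: "P \<in> L_set q f \<alpha> \<beta>" and P2: "P \<in> phi_pt ` L_set q f \<alpha> \<beta>"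
      using \<open>L_set q f \<alpha> \<beta> \<inter> phi_pt ` L_set q f \<alpha> \<beta> \<noteq> {}\<close> by blast
    from P1 obtain x y where "y \<in> Fsub q" "(x, y) \<noteq> (0, 0)" "P = pg_point (x, f x + y * \<alpha>, y * \<beta>)"
      unfolding L_set_def by blast
    moreover from P2 obtain x' y' where "y' \<in> Fsub q" "P = pg_point (y' * \<beta>, x', f x' + y' * \<alpha>)"
      unfolding L_set_def by (auto simp: phi_pg)
    ultimately show ?thesis using that by metis
  qed
  obtain c where c0: "c \<noteq> 0" and A: "x = c * (y' * \<beta>)" and B: "f x + y * \<alpha> = c * x'"
      and C: "y * \<beta> = c * (f x' + y' * \<alpha>)"
    using in_pg[OF eq[THEN subst[where P="\<lambda>S. (x, f x + y * \<alpha>, y * \<beta>) \<in> S"], OF self_pg]] by auto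
  show False
  proof (cases "y' = 0")
    case True
    then have x0: "x = 0" using A by simp
    then have yn: "y \<noteq> 0" using xy by simp
    define s where "s = f x'"
    have s: "s \<in> Fsub q" unfolding s_def by (rule rng)
    have s0: "s \<noteq> 0" using C True yn assms(7) c0 unfolding s_def by auto
    have "c = y * \<beta> / s" using C True s0 unfolding s_def by (simp add: field_simps)
    then have e1: "c * s = \<beta> * y" "\<alpha> * y = c * x'" using B x0 f0 assms(7) c0 s0 yn
      by (simp_all add: field_simps)
    then have "c * (\<beta> * x') = c * (\<alpha> * s)" by (metis mult.assoc mult.commute)
    then have "x' = s * (\<alpha> / \<beta>)" using c0 assms(7) by (simp add: field_simps)
    then have "f x' = s * f (\<alpha> / \<beta>)" using sc[OF s, of "\<alpha> / \<beta>"] by (simp del: times_divide_eq_right)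
    then have "s = s * f (\<alpha> / \<beta>)" unfolding s_def by simp
    then show False using s0 assms(8) by simp
  next
    case False
    define a where "a = f x'"
    have aF: "a \<in> Fsub q" unfolding a_def by (rule rng)
    have nz: "a + y' * \<alpha> \<noteq> 0"
    proof
      assume "a + y' * \<alpha> = 0"
      then have "y' * \<alpha> = f (- x')" unfolding a_def fneg by (simp add: eq_neg_iff_add_eq_0 add.commute)
      then have "\<alpha> = f (- x') / y'" using False by (simp add: field_simps)
      then show False using assms(6) Fsub_div[OF rng y'] by simp
    qed
    define k where "k = a / y'"
    have kF: "k \<in> Fsub q" unfolding k_def using Fsub_div[OF aF y'] .
    have ak: "\<alpha> + k = (a + y' * \<alpha>) / y'" unfolding k_def using False by (simp add: field_simps)
    have ak0: "\<alpha> + k \<noteq> 0" using ak nz False by simp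
    have cc: "c = y * \<beta> / (y' * (\<alpha> + k))" using C ak nz False unfolding a_def
      by (simp add: field_simps)
    have yn: "y \<noteq> 0" using cc c0 by auto
    define F where "F = f (\<beta>^2 / (\<alpha> + k))"
    have FF: "F \<in> Fsub q" unfolding F_def by (rule rng)
    have "x = (y' * (y * \<beta> * \<beta>)) / (y' * (\<alpha> + k))" using A cc by (simp add: ac_simps)
    also have "\<dots> = y * \<beta> * \<beta> / (\<alpha> + k)" using False by (rule mult_divide_mult_cancel_left)
    finally have xe: "x = y * (\<beta>^2 / (\<alpha> + k))" by (simp add: power2_eq_square ac_simps)
    have fx: "f x = y * F" unfolding xe F_def by (rule sc[OF y])
    have "y * (\<beta> * x') = y * (y' * ((F + \<alpha>) * (\<alpha> + k)))"
      using B fx cc c0 yn False ak0 assms(7) by (simp add: field_simps)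
    then have "\<beta> * x' = y' * ((F + \<alpha>) * (\<alpha> + k))" using yn by simp
    then have x'e: "x' = y' * ((F + \<alpha>) * (\<alpha> + k) / \<beta>)"
      using assms(7) by (simp add: field_simps)
    have "a = y' * f ((F + \<alpha>) * (\<alpha> + k) / \<beta>)" unfolding a_def x'e by (rule sc[OF y'])
    moreover have "k = a / y'" by (simp add: k_def)
    ultimately have k1: "k = f ((F + \<alpha>) * (\<alpha> + k) / \<beta>)" using False
      by (metis nonzero_mult_div_cancel_left)
    have "(F + \<alpha>) * (\<alpha> + k) / \<beta> = F * (\<alpha> / \<beta>) + ((F * k) * (1 / \<beta>) + (\<alpha>^2 / \<beta> + k * (\<alpha> / \<beta>)))"
      by (simp add: algebra_simps add_divide_distrib power2_eq_square)
    then have "f ((F + \<alpha>) * (\<alpha> + k) / \<beta>) = F * f (\<alpha> / \<beta>) + ((F * k) * f (1 / \<beta>) + (f (\<alpha>^2 / \<beta>) + k * f (\<alpha> / \<beta>)))"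
      by (simp only: lin sc[OF FF] sc[OF kF] sc[OF Fsub_mult[OF FF kF]])
    then have "k = f (\<alpha>^2 / \<beta>) + (F + k) * f (\<alpha> / \<beta>) + k * F * f (1 / \<beta>)"
      using k1 by (simp add: algebra_simps)
    then show False using assms(9) kF unfolding F_def by blast
  qed
qed

end
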